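(* (i) The following monomials of $P_5$ are strictly inadmissible: $x_1x_2^{6}x_3^{3}x_4^{6}x_5^{5}$, $x_1x_2^{6}x_3^{6}x_4^{3}x_5^{5}$, $x_1^{3}x_2^{5}x_3^{5}x_4^{2}x_5^{6}$, $x_1^{3}x_2^{5}x_3^{5}x_4^{6}x_5^{2}$, $x_1^{3}x_2^{5}x_3^{6}x_4^{5}x_5^{2}$, $x_1^{3}x_2^{4}x_3^{5}x_4^{3}x_5^{6}$, $x_1^{3}x_2^{4}x_3^{5}x_4^{6}x_5^{3}$, $x_1^{3}x_2^{5}x_3^{4}x_4^{3}x_5^{6}$, $x_1^{3}x_2^{5}x_3^{4}x_4^{6}x_5^{3}$, $x_1^{3}x_2^{5}x_3^{6}x_4^{4}x_5^{3}$. (ii) The following monomials of $P_5$ are strongly inadmissible: $x_1x_2^{3}x_3^{6}x_4^{6}x_5^{5}$, $x_1^{3}x_2x_3^{6}x_4^{6}x_5^{5}$, $x_1^{3}x_2^{5}x_3^{6}x_4^{6}x_5$, $x_1^{3}x_2^{5}x_3^{2}x_4^{6}x_5^{5}$, $x_1^{3}x_2^{5}x_3^{6}x_4^{2}x_5^{5}$.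
   Context: $P_5=\mathbb F_2[x_1,\dots,x_5]$, $\deg x_i=1$, a module over the mod-2 Steenrod algebra $\mathcal A$. $\mathcal A(s-1)$ is the sub-Hopf algebra generated by $Sq^r$, $0\le r<2^s$, with augmentation ideal $\mathcal A(s-1)^+$. For $x=x_1^{a_1}\cdots x_5^{a_5}$: weight vector $\omega_i(x)=\sum_j\alpha_{i-1}(a_j)$ ($\alpha_r(a)$ the $r$-th binary digit), exponent vector $\sigma(x)=(a_1,\dots,a_5)$, both ordered left-lexicographically; for monomials of equal degree, $x<y$ iff $\omega(x)<\omega(y)$, or $\omega(x)=\omega(y)$ and $\sigma(x)<\sigma(y)$. $P_5^-(\omega)$ is spanned by monomials $y$ of degree $\sum_i2^{i-1}\omega_i$ with $\omega(y)<\omega$. Minimal spike of degree $n$: if $\mu(n)=s\le5$, where $\mu(n)$ is the least $r$ with $n=\sum_{i=1}^r(2^{u_i}-1)$, $u_i>0$, write uniquely $n=\sum_{i=1}^s(2^{e_i}-1)$, $e_1>\dots>e_{s-1}\ge e_s>0$; the minimal spike is $z=\prod_{i=1}^sx_i^{2^{e_i}-1}$. $\mathcal P_{(5,n)}$ is spanned by monomials $x$ of degree $n$ with $\sum_{j=1}^h2^{j-1}\omega_j(x)<\sum_{j=1}^h2^{j-1}\omega_j(z)$ for some $h\ge1$. With $s=\max\{i:\omega_i(x)>0\}$: a monomial $x$ is strictly inadmissible if there are monomials $y_1,\dots,y_r<x$ with $x+\sum_jy_j\in\mathcal A(s-1)^+P_5+P_5^-(\omega(x))$; a monomial $x$ of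 degree $n$ is strongly inadmissible if there are monomials $y_1,\dots,y_t$ with $\omega(y_u)=\omega(x)$, $y_u<x$, and $x+\sum_uy_u\in\mathcal A(s-1)^+P_5+P_5^-(\omega(x))+\mathcal P_{(5,n)}$. *)

theory Defs
  imports Main
begin

text \<open>Monomials of P_5 = F_2[x_1,...,x_5] are exponent vectors (lists of length 5);
  x_1^{a_1}...x_5^{a_5} is [a_1,...,a_5].  A polynomial over F_2 is the finite set of
  monomials having coefficient 1; addition is symmetric difference.\<close>

type_synonym mono = "nat list"
type_synonym poly = "mono set"

definition mons :: "mono set" where
  "mons = {a. length a = 5}"

definition is_poly :: "poly \<Rightarrow> bool" where
  "is_poly f \<longleftrightarrow> finite f \<and> f \<subseteq> mons"

definition padd :: "poly \<Rightarrow> poly \<Rightarrow> poly" where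
  "padd f g = (f - g) \<union> (g - f)"

definition deg :: "mono \<Rightarrow> nat" where
  "deg a = sum_list a"

text \<open>Sq^k on a monomial (Cartan formula): the coefficient of x^b in Sq^k(x^a) is
  prod_i binom(a_i, b_i - a_i) mod 2, for b \<ge> a componentwise with deg b = deg a + k.\<close>
definition Sq_mono :: "nat \<Rightarrow> mono \<Rightarrow> poly" where
  "Sq_mono k a = {b. length b = 5 \<and> (\<forall>i<5. a ! i \<le> b ! i) \<and> deg b = deg a + k \<and>
      odd (\<Prod>i<5. (a ! i) choose (b ! i - a ! i))}"

definition Sq :: "nat \<Rightarrow> poly \<Rightarrow> poly" where
  "Sq k f = {b. odd (card {a \<in> f. b \<in> Sq_mono k a})}"

text \<open>A(s-1)^+ P_5: the F_2-span of all w f with w a nonempty product of generators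
  Sq^r, 0 < r < 2^s, and f \<in> P_5.  Since Sq^{r_1}...Sq^{r_k} f = Sq^{r_1}(g), this is
  the span of Sq^r f, 0 < r < 2^s.\<close>
inductive_set Aplus_hit :: "nat \<Rightarrow> poly set" for s :: nat where
  zero: "{} \<in> Aplus_hit s"
| gen: "0 < r \<Longrightarrow> r < 2 ^ s \<Longrightarrow> is_poly f \<Longrightarrow> Sq r f \<in> Aplus_hit s"
| add: "f \<in> Aplus_hit s \<Longrightarrow> g \<in> Aplus_hit s \<Longrightarrow> padd f g \<in> Aplus_hit s"

definition omega :: "mono \<Rightarrow> nat \<Rightarrow> nat" where
  "omega x i = (\<Sum>j<5. (x ! j div 2 ^ (i - 1)) mod 2)"

definition omega_eq :: "mono \<Rightarrow> mono \<Rightarrow> bool" where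
  "omega_eq x y \<longleftrightarrow> (\<forall>i\<ge>1. omega x i = omega y i)"

definition omega_less :: "mono \<Rightarrow> mono \<Rightarrow> bool" where
  "omega_less x y \<longleftrightarrow> (\<exists>i\<ge>1. omega x i < omega y i \<and> (\<forall>j. 1 \<le> j \<and> j < i \<longrightarrow> omega x j = omega y j))"

definition sigma_less :: "mono \<Rightarrow> mono \<Rightarrow> bool" where
  "sigma_less x y \<longleftrightarrow> (\<exists>i<5. x ! i < y ! i \<and> (\<forall>j<i. x ! j = y ! j))"

definition mono_less :: "mono \<Rightarrow> mono \<Rightarrow> bool" where
  "mono_less x y \<longleftrightarrow> deg x = deg y \<and> (omega_less x y \<or> (omega_eq x y \<and> sigma_less x y))"

text \<open>Monomials spanning P_5^-(omega(x)): degree = sum 2^{i-1} omega_i(x) (= deg x),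
  weight vector < omega(x).\<close>
definition Pminus_mons :: "mono \<Rightarrow> mono set" where
  "Pminus_mons x = {y \<in> mons. deg y = deg x \<and> omega_less y x}"

definition mu :: "nat \<Rightarrow> nat" where
  "mu n = (LEAST r. \<exists>u. length u = r \<and> (\<forall>v\<in>set u. 0 < v) \<and> n = sum_list (map (\<lambda>v. 2 ^ v - 1) u))"

definition min_spike :: "nat \<Rightarrow> mono" where
  "min_spike n = (THE z. \<exists>e. length e = mu n \<and>
      (\<forall>i. i + 2 < length e \<longrightarrow> e ! (i + 1) < e ! i) \<and>
      (\<forall>i. i + 1 < length e \<longrightarrow> e ! (i + 1) \<le> e ! i) \<and>
      (\<forall>v\<in>set e. 0 < v) \<and>
      n = sum_list (map (\<lambda>v. 2 ^ v - 1) e) \<and>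
      z = map (\<lambda>j. if j < length e then 2 ^ (e ! j) - 1 else 0) [0..<5])"

definition Pspike_mons :: "nat \<Rightarrow> mono set" where
  "Pspike_mons n = {x \<in> mons. mu n \<le> 5 \<and> deg x = n \<and>
      (\<exists>h\<ge>1. (\<Sum>j=1..h. 2 ^ (j - 1) * omega x j) < (\<Sum>j=1..h. 2 ^ (j - 1) * omega (min_spike n) j))}"

definition smax :: "mono \<Rightarrow> nat" where
  "smax x = (GREATEST i. 0 < omega x i)"

definition strictly_inadmissible :: "mono \<Rightarrow> bool" where
  "strictly_inadmissible x \<longleftrightarrow> x \<in> mons \<and>
     (\<exists>Y. finite Y \<and> Y \<subseteq> mons \<and> (\<forall>y\<in>Y. mono_less y x) \<and>
        (\<exists>h m. h \<in> Aplus_hit (smax x) \<and> finite m \<and> m \<subseteq> Pminus_mons x \<and>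
               insert x Y = padd h m))"

definition strongly_inadmissible :: "mono \<Rightarrow> bool" where
  "strongly_inadmissible x \<longleftrightarrow> x \<in> mons \<and>
     (\<exists>Y. finite Y \<and> Y \<subseteq> mons \<and> (\<forall>y\<in>Y. omega_eq y x \<and> mono_less y x) \<and>
        (\<exists>h m p. h \<in> Aplus_hit (smax x) \<and> finite m \<and> m \<subseteq> Pminus_mons x \<and>
               finite p \<and> p \<subseteq> Pspike_mons (deg x) \<and>
               insert x Y = padd (padd h m) p))"

end

theory Submission imports Defs begin

fun comps :: "nat \<Rightarrow> nat \<Rightarrow> nat list list" where
  "comps 0 k = (if k = 0 then [[]] else [])"
| "comps (Suc n) k = concat (map (\<lambda>i. map (Cons i) (comps n (k - i))) [0..<Suc k])"

lemma set_comps: "set (comps n k) = {d. length d = n \<and> sum_list d = k}"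
proof (induction n arbitrary: k)
  case 0 then show ?case by auto
next
  case (Suc n)
  show ?case
  proof (intro set_eqI iffI)
    fix d assume "d \<in> set (comps (Suc n) k)"
    then show "d \<in> {d. length d = Suc n \<and> sum_list d = k}" using Suc by auto
  next
    fix d assume "d \<in> {d. length d = Suc n \<and> sum_list d = k}"
    then obtain i d' where d: "d = i # d'" "length d' = n" "i + sum_list d' = k"
      by (cases d) auto
    then show "d \<in> set (comps (Suc n) k)" using Suc by force
  qed
qed

definition sqm :: "nat \<Rightarrow> mono \<Rightarrow> mono list" where
  "sqm k a = filter (\<lambda>b. odd (prod_list (map (\<lambda>i. (a ! i) choose (b ! i - a ! i)) [0..<5])))
      (map (\<lambda>d. map2 (+) a d) (comps 5 k))"

lemma len5: "length a = 5 \<Longrightarrow> \<exists>a0 a1 a2 a3 a4. a = [a0,a1,a2,a3,a4]"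
  by (auto simp: numeral_eq_Suc length_Suc_conv)

lemma upt5: "[0..<5] = [0,1,2,3,(4::nat)]" by (simp add: upt_rec)

lemma all5: "(\<forall>i<5. P (i::nat)) \<longleftrightarrow> P 0 \<and> P 1 \<and> P 2 \<and> P 3 \<and> P 4"
  by (auto simp: numeral_eq_Suc less_Suc_eq)

lemma prod5: "(\<Prod>i<5. f (i::nat)) = f 0 * f 1 * f 2 * f 3 * f 4"
  by (simp add: numeral_eq_Suc lessThan_Suc mult_ac)

lemma Sq_mono_sqm: assumes "length a = 5" shows "Sq_mono k a = set (sqm k a)"
proof -
  obtain a0 a1 a2 a3 a4 where a: "a = [a0,a1,a2,a3,a4]" using len5[OF assms] by blast
  show ?thesis
  proof (intro set_eqI iffI)
    fix b assume "b \<in> Sq_mono k a"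
    then have b: "length b = 5" "\<forall>i<5. a ! i \<le> b ! i" "deg b = deg a + k"
       "odd (\<Prod>i<5. (a ! i) choose (b ! i - a ! i))" by (auto simp: Sq_mono_def)
    obtain b0 b1 b2 b3 b4 where bb: "b = [b0,b1,b2,b3,b4]" using len5[OF b(1)] by blast
    have "[b0-a0,b1-a1,b2-a2,b3-a3,b4-a4] \<in> set (comps 5 k)"
      using b unfolding set_comps bb a by (simp add: all5 deg_def)
    moreover have "b = map2 (+) a [b0-a0,b1-a1,b2-a2,b3-a3,b4-a4]"
      using b unfolding bb a by (simp add: all5)
    ultimately have "b \<in> (\<lambda>d. map2 (+) a d) ` set (comps 5 k)" by blast
    moreover have "odd (prod_list (map (\<lambda>i. (a ! i) choose (b ! i - a ! i)) [0..<5]))"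
      using b(4) by (simp add: prod5 upt5 mult_ac)
    ultimately show "b \<in> set (sqm k a)" unfolding sqm_def by simp
  next
    fix b assume "b \<in> set (sqm k a)"
    then obtain d where d: "d \<in> set (comps 5 k)" "b = map2 (+) a d"
      "odd (prod_list (map (\<lambda>i. (a ! i) choose (b ! i - a ! i)) [0..<5]))"
      unfolding sqm_def by auto
    have dl: "length d = 5" "sum_list d = k" using d(1) unfolding set_comps by auto
    obtain d0 d1 d2 d3 d4 where dd: "d = [d0,d1,d2,d3,d4]" using len5[OF dl(1)] by blast
    have bb: "b = [a0+d0,a1+d1,a2+d2,a3+d3,a4+d4]" using d(2) unfolding dd a by simp
    show "b \<in> Sq_mono k a" using d(3) dl(2) unfolding Sq_mono_def bb dd a
      by (simp add: all5 prod5 upt5 deg_def mult_ac)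
  qed
qed


definition lxor :: "mono list \<Rightarrow> mono list \<Rightarrow> mono list" where
  "lxor xs ys = filter (\<lambda>a. a \<notin> set ys) xs @ filter (\<lambda>a. a \<notin> set xs) ys"

lemma set_lxor: "set (lxor xs ys) = padd (set xs) (set ys)"
  by (auto simp: lxor_def padd_def)

fun hitl :: "(nat \<times> mono) list \<Rightarrow> mono list" where
  "hitl [] = []"
| "hitl ((r,m)#cs) = lxor (sqm r m) (hitl cs)"

lemma Sq_single: "Sq k {m} = Sq_mono k m"
proof (intro set_eqI)
  fix b
  have "{a \<in> {m}. b \<in> Sq_mono k a} = (if b \<in> Sq_mono k m then {m} else {})" by auto
  then show "b \<in> Sq k {m} \<longleftrightarrow> b \<in> Sq_mono k m" unfolding Sq_def by auto
qed

lemma hitl_in: "list_all (\<lambda>(r,m). 0 < r \<and> r < 2 ^ s \<and> length m = 5) cs \<Longrightarrow> set (hitl cs) \<in> Aplus_hit s"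
proof (induction cs)
  case Nil then show ?case by (simp add: Aplus_hit.zero)
next
  case (Cons c cs)
  obtain r m where c: "c = (r,m)" by (cases c)
  have h: "0 < r" "r < 2 ^ s" "length m = 5" "list_all (\<lambda>(r,m). 0 < r \<and> r < 2 ^ s \<and> length m = 5) cs"
    using Cons.prems c by auto
  have ip: "is_poly {m}" using h(3) by (simp add: is_poly_def mons_def)
  have "set (sqm r m) = Sq r {m}" using Sq_mono_sqm[OF h(3)] Sq_single by simp
  then have "set (sqm r m) \<in> Aplus_hit s" using Aplus_hit.gen[OF h(1,2) ip] by simp
  then show ?case using Cons.IH[OF h(4)] c by (simp add: set_lxor Aplus_hit.add)
qed

definition om :: "mono \<Rightarrow> nat \<Rightarrow> nat" where
  "om x i = sum_list (map (\<lambda>j. (x ! j div 2 ^ (i - 1)) mod 2) [0..<5])"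

lemma sum5: "(\<Sum>i<5. f (i::nat)) = f 0 + f 1 + f 2 + f 3 + (f 4 :: nat)"
  by (simp add: numeral_eq_Suc lessThan_Suc add_ac)

lemma omega_om: "omega x i = om x i"
  unfolding omega_def om_def by (simp add: sum5 upt5 add_ac)

fun ol :: "mono \<Rightarrow> mono \<Rightarrow> nat \<Rightarrow> nat \<Rightarrow> bool" where
  "ol y x i 0 = False"
| "ol y x i (Suc n) = (om y i < om x i \<or> (om y i = om x i \<and> ol y x (Suc i) n))"

lemma ol_sound: "ol y x i n \<Longrightarrow> \<exists>k\<ge>i. omega y k < omega x k \<and> (\<forall>j. i \<le> j \<and> j < k \<longrightarrow> omega y j = omega x j)"
proof (induction n arbitrary: i)
  case 0 then show ?case by simp
next
  case (Suc n)
  show ?case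
  proof (cases "om y i < om x i")
    case True then show ?thesis by (intro exI[of _ i]) (auto simp: omega_om)
  next
    case False
    then have e: "om y i = om x i" "ol y x (Suc i) n" using Suc.prems by auto
    from Suc.IH[OF e(2)] obtain k where k: "k \<ge> Suc i" "omega y k < omega x k"
      "\<forall>j. Suc i \<le> j \<and> j < k \<longrightarrow> omega y j = omega x j" by blast
    have "\<forall>j. i \<le> j \<and> j < k \<longrightarrow> omega y j = omega x j"
    proof (intro allI impI)
      fix j assume "i \<le> j \<and> j < k"
      then show "omega y j = omega x j" using k(3) e(1) by (cases "j = i") (auto simp: omega_om)
    qed
    then show ?thesis using k by (intro exI[of _ k]) auto
  qed
qed

lemma ol_less: "ol y x 1 n \<Longrightarrow> omega_less y x"
  using ol_sound[of y x 1 n] unfolding omega_less_def by blast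

lemma omega_zero: assumes "\<forall>j<5. x ! j < 2 ^ N" "N < i" shows "omega x i = 0"
proof -
  have "2 ^ N \<le> (2::nat) ^ (i - 1)" using assms(2) by (intro power_increasing) auto
  then have "\<forall>j<5. x ! j div 2 ^ (i - 1) = 0" using assms(1)
    by (metis div_less order_less_le_trans)
  then show ?thesis unfolding omega_def by simp
qed

definition oe :: "mono \<Rightarrow> mono \<Rightarrow> bool" where
  "oe y x \<longleftrightarrow> length y = 5 \<and> length x = 5 \<and> list_all (\<lambda>v. v < 128) y \<and> list_all (\<lambda>v. v < 128) x \<and>
     list_all (\<lambda>i. om y i = om x i) [1..<8]"

lemma oe_eq: assumes "oe y x" shows "omega_eq y x"
  unfolding omega_eq_def
proof (intro allI impI)
  fix i :: nat assume i: "1 \<le> i"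
  have bnd: "\<forall>j<5. y ! j < 2 ^ 7" "\<forall>j<5. x ! j < 2 ^ 7"
    using assms unfolding oe_def by (auto simp: list_all_length)
  show "omega y i = omega x i"
  proof (cases "i < 8")
    case True then show ?thesis using assms i unfolding oe_def by (auto simp: list_all_iff omega_om)
  next
    case False then show ?thesis using omega_zero[OF bnd(1)] omega_zero[OF bnd(2)] by simp
  qed
qed

definition sl :: "mono \<Rightarrow> mono \<Rightarrow> bool" where
  "sl y x \<longleftrightarrow> list_ex (\<lambda>i. y ! i < x ! i \<and> list_all (\<lambda>j. y ! j = x ! j) [0..<i]) [0..<5]"

lemma sl_less: "sl y x \<Longrightarrow> sigma_less y x"
  unfolding sl_def sigma_less_def by (auto simp: list_ex_iff list_all_iff)

lemma smax_ge: assumes "0 < omega x k" "\<forall>j<5. x ! j < 2 ^ N" shows "k \<le> smax x"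
proof -
  have "\<forall>y. 0 < omega x y \<longrightarrow> y \<le> N" using omega_zero[OF assms(2)] by (metis less_irrefl not_le)
  then show ?thesis unfolding smax_def using Greatest_le_nat[of "\<lambda>i. 0 < omega x i" k N] assms(1) by blast
qed

lemma omega_less_irrefl: "\<not> omega_less x x"
  unfolding omega_less_def by auto

lemma strict_crit:
  assumes x: "length x = 5" "list_all (\<lambda>v. v < 8) x" "0 < om x 3"
    and cs: "list_all (\<lambda>(r,m). 0 < r \<and> r < 8 \<and> length m = 5) cs"
    and xin: "x \<in> set (hitl cs)"
    and ok: "\<forall>y\<in>set (hitl cs). y \<noteq> x \<longrightarrow> length y = 5 \<and> sum_list y = sum_list x \<and> (ol y x 1 7 \<or> (oe y x \<and> sl y x))"
  shows "strictly_inadmissible x"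
proof -
  have b8: "\<forall>j<5. x ! j < 2 ^ 3" using x(1,2) by (auto simp: list_all_length)
  have "3 \<le> smax x" using smax_ge[OF _ b8] x(3) by (simp add: omega_om)
  then have "(8::nat) \<le> 2 ^ smax x" using power_increasing[of 3 "smax x" "2::nat"] by simp
  then have cs': "list_all (\<lambda>(r,m). 0 < r \<and> r < 2 ^ smax x \<and> length m = 5) cs"
    using cs by (auto simp: list_all_iff)
  define h where "h = set (hitl cs)"
  define m where "m = {y \<in> h. omega_less y x}"
  define Y where "Y = h - m - {x}"
  have hA: "h \<in> Aplus_hit (smax x)" unfolding h_def by (rule hitl_in[OF cs'])
  have fh: "finite h" unfolding h_def by simp
  have okh: "\<And>y. y \<in> h \<Longrightarrow> y \<noteq> x \<Longrightarrow> length y = 5 \<and> deg y = deg x \<and> (omega_less y x \<or> (omega_eq y x \<and> sigma_less y x))"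
    using ok ol_less oe_eq sl_less unfolding h_def deg_def by blast
  have "m \<subseteq> Pminus_mons x" unfolding m_def Pminus_mons_def mons_def
    using okh omega_less_irrefl by auto
  moreover have "finite m" using fh unfolding m_def by simp
  moreover have "insert x Y = padd h m"
    using xin omega_less_irrefl unfolding Y_def padd_def m_def h_def by auto
  moreover have "finite Y" "Y \<subseteq> mons" "\<forall>y\<in>Y. mono_less y x"
    using fh okh unfolding Y_def m_def mons_def mono_less_def by auto
  moreover have "x \<in> mons" using x(1) by (simp add: mons_def)
  ultimately show ?thesis unfolding strictly_inadmissible_def using hA by blast
qed

lemma pow_ge5: "5 \<le> v \<Longrightarrow> (32::nat) \<le> 2 ^ v"
  using power_increasing[of 5 v "2::nat"] by simp

lemma less5: "(a::nat) < 5 \<Longrightarrow> a = 0 \<or> a = 1 \<or> a = 2 \<or> a = 3 \<or> a = 4" by auto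

lemma mu21: "mu 21 = 3"
  unfolding mu_def
proof (rule Least_equality)
  show "\<exists>u. length u = 3 \<and> (\<forall>v\<in>set u. 0 < v) \<and> 21 = sum_list (map (\<lambda>v. (2::nat) ^ v - 1) u)"
    by (rule exI[of _ "[4,2,2::nat]"]) simp
next
  fix r assume "\<exists>u. length u = r \<and> (\<forall>v\<in>set u. 0 < v) \<and> 21 = sum_list (map (\<lambda>v. (2::nat) ^ v - 1) u)"
  then obtain u where u: "length u = r" "\<forall>v\<in>set u. 0 < v" "21 = sum_list (map (\<lambda>v. (2::nat) ^ v - 1) u)" by blast
  show "3 \<le> r"
  proof (rule ccontr)
    assume "\<not> 3 \<le> r"
    then have "r = 0 \<or> r = 1 \<or> r = 2" by auto
    then show False
    proof (elim disjE)
      assume "r = 0" then show False using u by simp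
    next
      assume "r = 1"
      then obtain v where v: "u = [v]" using u(1) by (auto simp: length_Suc_conv)
      then have e: "2 ^ v = (22::nat)" using u(3) by simp
      show False
      proof (cases "v < 5")
        case True then show False using e by (auto dest!: less5)
      next
        case False then show False using e pow_ge5[of v] by simp
      qed
    next
      assume "r = 2"
      then obtain a b where ab: "u = [a,b]" using u(1) by (auto simp: numeral_eq_Suc length_Suc_conv)
      have pos: "0 < a" "0 < b" using u(2) ab by simp_all
      have ev: "even ((2::nat) ^ a + 2 ^ b)" using pos by simp
      have "21 = ((2::nat) ^ a - 1) + (2 ^ b - 1)" using u(3) ab by simp
      moreover have "(1::nat) \<le> 2 ^ a" "(1::nat) \<le> 2 ^ b" by simp_all
      ultimately have "(2::nat) ^ a + 2 ^ b = 23" by linarith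
      then show False using ev by simp
    qed
  qed
qed

lemma spike21: "min_spike 21 = [15,3,3,0,0]"
  unfolding min_spike_def mu21
proof (rule the_equality)
  show "\<exists>e. length e = 3 \<and> (\<forall>i. i + 2 < length e \<longrightarrow> e ! (i + 1) < e ! i) \<and>
        (\<forall>i. i + 1 < length e \<longrightarrow> e ! (i + 1) \<le> e ! i) \<and> (\<forall>v\<in>set e. 0 < v) \<and>
        21 = sum_list (map (\<lambda>v. (2::nat) ^ v - 1) e) \<and>
        [15,3,3,0,0] = map (\<lambda>j. if j < length e then (2::nat) ^ (e ! j) - 1 else 0) [0..<5]"
  proof (rule exI[of _ "[4,2,2::nat]"], intro conjI allI impI)
    fix i :: nat assume "i + 2 < length [4,2,2::nat]" then have "i = 0" by simp
    then show "[4,2,2::nat] ! (i + 1) < [4,2,2] ! i" by simp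
  next
    fix i :: nat assume "i + 1 < length [4,2,2::nat]" then have "i = 0 \<or> i = 1" by auto
    then show "[4,2,2::nat] ! (i + 1) \<le> [4,2,2] ! i" by auto
  qed (simp_all add: upt5)
next
  fix z assume "\<exists>e. length e = 3 \<and> (\<forall>i. i + 2 < length e \<longrightarrow> e ! (i + 1) < e ! i) \<and>
        (\<forall>i. i + 1 < length e \<longrightarrow> e ! (i + 1) \<le> e ! i) \<and> (\<forall>v\<in>set e. 0 < v) \<and>
        21 = sum_list (map (\<lambda>v. (2::nat) ^ v - 1) e) \<and>
        z = map (\<lambda>j. if j < length e then (2::nat) ^ (e ! j) - 1 else 0) [0..<5]"
  then obtain e where e: "length e = 3" "\<forall>i. i + 2 < length e \<longrightarrow> e ! (i + 1) < e ! i"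
    "\<forall>i. i + 1 < length e \<longrightarrow> e ! (i + 1) \<le> e ! i" "\<forall>v\<in>set e. 0 < v"
    "21 = sum_list (map (\<lambda>v. (2::nat) ^ v - 1) e)"
    "z = map (\<lambda>j. if j < length e then (2::nat) ^ (e ! j) - 1 else 0) [0..<5]" by blast
  obtain a b c where abc: "e = [a,b,c]" using e(1) by (auto simp: numeral_eq_Suc length_Suc_conv)
  have o: "b < a" "c \<le> b" "0 < c" using e(2)[rule_format, of 0] e(3)[rule_format, of 1] e(4) abc by auto
  have ss: "sum_list (map (\<lambda>v. (2::nat) ^ v - 1) e) = (2 ^ a - 1) + ((2 ^ b - 1) + ((2 ^ c - 1) + 0))"
    unfolding abc by (simp only: list.map sum_list.Cons sum_list.Nil)
  have s: "21 = (2 ^ a - 1) + (2 ^ b - 1) + (2 ^ c - (1::nat))" using e(5) ss by linarith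
  have "a < 5"
  proof (rule ccontr)
    assume "\<not> a < 5" then have "(32::nat) \<le> 2 ^ a" using pow_ge5 by simp
    then show False using s by linarith
  qed
  then have "b < 5" "c < 5" using o by auto
  moreover have t: "2 ^ a + 2 ^ b + 2 ^ c = (24::nat)"
  proof -
    have "(1::nat) \<le> 2 ^ a" "(1::nat) \<le> 2 ^ b" "(1::nat) \<le> 2 ^ c" by simp_all
    then show ?thesis using s by linarith
  qed
  ultimately have "a = 4 \<and> b = 2 \<and> c = 2"
    using less5[OF \<open>a < 5\<close>] o by (elim disjE less5[elim_format] ; simp)
  then show "z = [15,3,3,0,0]" using e(6) abc by (simp add: upt5)
qed


definition spike_b :: "mono \<Rightarrow> bool" where
  "spike_b y \<longleftrightarrow> list_ex (\<lambda>h. sum_list (map (\<lambda>j. 2 ^ (j - 1) * om y j) [1..<Suc h])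
       < sum_list (map (\<lambda>j. 2 ^ (j - 1) * om [15,3,3,0,0] j) [1..<Suc h])) [1..<8]"

lemma sl_upt: "sum_list (map f [1..<Suc h]) = (\<Sum>j=1..h. (f j::nat))"
  by (simp only: sum_set_upt_conv_sum_list_nat[symmetric] set_upt atLeastLessThanSuc_atLeastAtMost)

lemma spike_sound: assumes "length y = 5" "sum_list y = 21" "spike_b y" shows "y \<in> Pspike_mons 21"
proof -
  obtain h where h: "1 \<le> h" "sum_list (map (\<lambda>j. 2 ^ (j - 1) * om y j) [1..<Suc h])
       < sum_list (map (\<lambda>j. 2 ^ (j - 1) * om [15,3,3,0,0] j) [1..<Suc h])"
    using assms(3) unfolding spike_b_def by (auto simp: list_ex_iff)
  have "(\<Sum>j=1..h. 2 ^ (j - 1) * omega y j) < (\<Sum>j=1..h. 2 ^ (j - 1) * omega (min_spike 21) j)"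
    using h(2) unfolding spike21 omega_om sl_upt .
  then show ?thesis using h(1) assms unfolding Pspike_mons_def mons_def deg_def mu21 by auto
qed

lemma strong_crit:
  assumes x: "length x = 5" "list_all (\<lambda>v. v < 8) x" "0 < om x 3" "sum_list x = 21"
    and cs: "list_all (\<lambda>(r,m). 0 < r \<and> r < 8 \<and> length m = 5) cs"
    and xin: "x \<in> set (hitl cs)"
    and ok: "\<forall>y\<in>set (hitl cs). y \<noteq> x \<longrightarrow> length y = 5 \<and> sum_list y = sum_list x \<and> (ol y x 1 7 \<or> (oe y x \<and> sl y x) \<or> spike_b y)"
  shows "strongly_inadmissible x"
proof -
  have b8: "\<forall>j<5. x ! j < 2 ^ 3" using x(1,2) by (auto simp: list_all_length)
  have "3 \<le> smax x" using smax_ge[OF _ b8] x(3) by (simp add: omega_om)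
  then have "(8::nat) \<le> 2 ^ smax x" using power_increasing[of 3 "smax x" "2::nat"] by simp
  then have cs': "list_all (\<lambda>(r,m). 0 < r \<and> r < 2 ^ smax x \<and> length m = 5) cs"
    using cs by (auto simp: list_all_iff)
  define h where "h = set (hitl cs)"
  define m where "m = {y \<in> h. omega_less y x}"
  define p where "p = {y \<in> h - m - {x}. \<not> (omega_eq y x \<and> sigma_less y x)}"
  define Y where "Y = h - m - p - {x}"
  have hA: "h \<in> Aplus_hit (smax x)" unfolding h_def by (rule hitl_in[OF cs'])
  have fh: "finite h" unfolding h_def by simp
  have okh: "\<And>y. y \<in> h \<Longrightarrow> y \<noteq> x \<Longrightarrow> length y = 5 \<and> deg y = deg x \<and> (omega_less y x \<or> (omega_eq y x \<and> sigma_less y x) \<or> y \<in> Pspike_mons (deg x))"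
    using ok ol_less oe_eq sl_less spike_sound x(4) unfolding h_def deg_def by metis
  have "m \<subseteq> Pminus_mons x" unfolding m_def Pminus_mons_def mons_def
    using okh omega_less_irrefl by auto
  moreover have "finite m" using fh unfolding m_def by simp
  moreover have "p \<subseteq> Pspike_mons (deg x)" using okh unfolding p_def m_def by auto
  moreover have "finite p" using fh unfolding p_def by simp
  moreover have "insert x Y = padd (padd h m) p"
    using xin omega_less_irrefl unfolding Y_def padd_def m_def h_def p_def by auto
  moreover have "finite Y" "Y \<subseteq> mons" "\<forall>y\<in>Y. omega_eq y x \<and> mono_less y x"
    using fh okh unfolding Y_def m_def p_def mons_def mono_less_def by auto
  moreover have "x \<in> mons" using x(1) by (simp add: mons_def)
  ultimately show ?thesis unfolding strongly_inadmissible_def using hA by blast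
qed


lemma si0: "strictly_inadmissible [1,6,3,6,5]"
  by (rule strict_crit[where cs = "[(1, [1,3,5,5,6]), (1, [1,3,5,6,5]), (1, [1,3,6,5,5]), (1, [1,5,3,5,6]), (1, [1,5,3,6,5]), (1, [1,6,3,5,5]), (2, [1,3,5,5,5]), (2, [1,5,3,5,5])]"]; code_simp)

lemma si1: "strictly_inadmissible [1,6,6,3,5]"
  by (rule strict_crit[where cs = "[(1, [1,3,5,5,6]), (1, [1,3,5,6,5]), (1, [1,3,6,5,5]), (1, [1,5,5,3,6]), (1, [1,5,6,3,5]), (1, [1,6,5,3,5]), (2, [1,3,5,5,5]), (2, [1,5,5,3,5])]"]; code_simp)

lemma si2: "strictly_inadmissible [3,5,5,2,6]"
  by (rule strict_crit[where cs = "[(1, [3,5,5,1,6]), (1, [5,3,5,1,6]), (1, [5,5,3,1,6]), (2, [3,3,5,2,6]), (2, [3,3,6,1,6]), (2, [3,5,3,2,6]), (2, [3,6,3,1,6]), (2, [6,3,3,1,6])]"]; code_simp)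

lemma si3: "strictly_inadmissible [3,5,5,6,2]"
  by (rule strict_crit[where cs = "[(1, [3,5,3,5,4]), (1, [3,5,5,5,2]), (1, [5,3,3,5,4]), (1, [5,3,5,5,2]), (1, [5,5,3,5,2]), (2, [3,3,3,6,4]), (2, [3,3,5,6,2]), (2, [3,3,6,5,2]), (2, [3,5,3,6,2]), (2, [3,6,3,5,2]), (2, [6,3,3,5,2])]"]; code_simp)

lemma si4: "strictly_inadmissible [3,5,6,5,2]"
  by (rule strict_crit[where cs = "[(1, [3,5,5,3,4]), (1, [3,5,5,5,2]), (1, [5,3,5,3,4]), (1, [5,3,5,5,2]), (1, [5,5,5,3,2]), (2, [3,3,5,6,2]), (2, [3,3,6,3,4]), (2, [3,3,6,5,2]), (2, [3,5,6,3,2]), (2, [3,6,5,3,2]), (2, [6,3,5,3,2])]"]; code_simp)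

lemma si5: "strictly_inadmissible [3,4,5,3,6]"
  by (rule strict_crit[where cs = "[(1, [5,1,3,5,6]), (1, [5,1,5,3,6]), (2, [3,1,3,6,6]), (2, [3,1,6,3,6]), (2, [3,2,3,5,6]), (2, [3,2,5,3,6]), (2, [6,1,3,3,6])]"]; code_simp)

lemma si6: "strictly_inadmissible [3,4,5,6,3]"
  by (rule strict_crit[where cs = "[(1, [5,1,3,6,5]), (1, [5,1,5,6,3]), (2, [3,1,3,6,6]), (2, [3,1,6,6,3]), (2, [3,2,3,6,5]), (2, [3,2,5,6,3]), (2, [6,1,3,6,3])]"]; code_simp)

lemma si7: "strictly_inadmissible [3,5,4,3,6]"
  by (rule strict_crit[where cs = "[(1, [3,5,1,5,6]), (1, [5,3,1,5,6]), (1, [5,5,1,3,6]), (2, [3,3,1,6,6]), (2, [3,3,2,5,6]), (2, [3,5,2,3,6]), (2, [3,6,1,3,6]), (2, [6,3,1,3,6])]"]; code_simp)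

lemma si8: "strictly_inadmissible [3,5,4,6,3]"
  by (rule strict_crit[where cs = "[(1, [3,5,1,6,5]), (1, [5,3,1,6,5]), (1, [5,5,1,6,3]), (2, [3,3,1,6,6]), (2, [3,3,2,6,5]), (2, [3,5,2,6,3]), (2, [3,6,1,6,3]), (2, [6,3,1,6,3])]"]; code_simp)

lemma si9: "strictly_inadmissible [3,5,6,4,3]"
  by (rule strict_crit[where cs = "[(1, [3,5,5,2,5]), (1, [3,5,5,4,3]), (1, [5,3,5,2,5]), (1, [5,3,5,4,3]), (1, [5,5,5,2,3]), (2, [3,3,5,2,6]), (2, [3,3,6,2,5]), (2, [3,3,6,4,3]), (2, [3,5,6,2,3]), (2, [3,6,5,2,3]), (2, [6,3,5,2,3])]"]; code_simp)

lemma st0: "strongly_inadmissible [1,3,6,6,5]"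
  by (rule strong_crit[where cs = "[(1, [1,3,5,5,6]), (1, [1,3,5,6,5]), (1, [1,3,6,5,5]), (2, [1,3,5,5,5])]"]; code_simp)

lemma st1: "strongly_inadmissible [3,1,6,6,5]"
  by (rule strong_crit[where cs = "[(1, [3,1,5,5,6]), (1, [3,1,5,6,5]), (1, [3,1,6,5,5]), (2, [3,1,5,5,5])]"]; code_simp)

lemma st2: "strongly_inadmissible [3,5,6,6,1]"
  by (rule strong_crit[where cs = "[(1, [3,5,5,5,2]), (1, [3,5,5,6,1]), (1, [3,5,6,5,1]), (2, [3,5,5,5,1])]"]; code_simp)

lemma st3: "strongly_inadmissible [3,5,2,6,5]"
  by (rule strong_crit[where cs = "[(1, [3,5,1,5,6]), (1, [3,5,1,6,5]), (1, [3,5,2,5,5]), (2, [3,5,1,5,5])]"]; code_simp)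

lemma st4: "strongly_inadmissible [3,5,6,2,5]"
  by (rule strong_crit[where cs = "[(1, [3,5,5,1,6]), (1, [3,5,5,2,5]), (1, [3,5,6,1,5]), (2, [3,5,5,1,5])]"]; code_simp)

theorem lemma4:
  shows "(\<forall>x\<in>set [[1,6,3,6,5], [1,6,6,3,5], [3,5,5,2,6], [3,5,5,6,2], [3,5,6,5,2],
                   [3,4,5,3,6], [3,4,5,6,3], [3,5,4,3,6], [3,5,4,6,3], [3,5,6,4,3]].
            strictly_inadmissible x) \<and>
         (\<forall>x\<in>set [[1,3,6,6,5], [3,1,6,6,5], [3,5,6,6,1], [3,5,2,6,5], [3,5,6,2,5]].
            strongly_inadmissible x)"
  using si0 si1 si2 si3 si4 si5 si6 si7 si8 si9 st0 st1 st2 st3 st4 by simp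

end
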